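(* Let $\Psi\in\mathcal P_p$, $m\ge p$ and $q\in\{1,2,\ldots\}$. The density $B\mapsto\mathcal W^{-q}(B\mid\Psi,m)$ on $\mathcal P_p$ has a unique global maximizer, namely $$B^*=\Big(\frac{q}{qm+p+1}\Big)^{1/q}\Psi.$$
   Context: $\mathcal P_p$ is the set of positive definite $p\times p$ real matrices. The power inverse Wishart density is $\mathcal W^{-q}(B\mid\Psi,m)=c_{m,q}^{-1}\exp(-\tfrac12\operatorname{tr}((\Psi^{-1/2}B\Psi^{-1/2})^{-q}))|\Psi|^{qm/2}|B|^{-(qm+p+1)/2}$, where $c_{m,q}\in(0,\infty)$ is a normalizing constant depending only on $m,q,p$ and $\Psi^{1/2}$ is the positive definite square root, $\Psi^{-1/2}=(\Psi^{1/2})^{-1}$. *)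

theory Defs
  imports "HOL-Analysis.Analysis"
begin

text \<open>Positive definite real p x p matrices (p = CARD('n)): symmetric with positive quadratic form.\<close>
definition posdef :: "real^'n^'n \<Rightarrow> bool" where
  "posdef A \<longleftrightarrow> transpose A = A \<and> (\<forall>x. x \<noteq> 0 \<longrightarrow> x \<bullet> (A *v x) > 0)"

definition psd_sqrt :: "real^'n^'n \<Rightarrow> real^'n^'n" where
  "psd_sqrt A = (THE S. posdef S \<and> S ** S = A)"

definition matpow :: "real^'n^'n \<Rightarrow> nat \<Rightarrow> real^'n^'n" where
  "matpow A k = ((\<lambda>M. M ** A) ^^ k) (mat 1)"

definition matpow_neg :: "real^'n^'n \<Rightarrow> nat \<Rightarrow> real^'n^'n" where
  "matpow_neg A k = matpow (matrix_inv A) k"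

text \<open>Power inverse Wishart density W^{-q}(B | Psi, m) with normalizing constant c.\<close>
definition pinvwishart ::
  "real \<Rightarrow> nat \<Rightarrow> real \<Rightarrow> real^'n^'n \<Rightarrow> real^'n^'n \<Rightarrow> real" where
  "pinvwishart c q m Psi B =
     inverse c
     * exp (- (1/2) * trace (matpow_neg
            (matrix_inv (psd_sqrt Psi) ** B ** matrix_inv (psd_sqrt Psi)) q))
     * det Psi powr (real q * m / 2)
     * det B powr (- (real q * m + real CARD('n) + 1) / 2)"

end

theory Submission
  imports Defs
begin


definition mdiag :: "('n::finite \<Rightarrow> real) \<Rightarrow> real^'n^'n" where
  "mdiag d = (\<chi> i j. if i = j then d i else 0)"

lemma mul_mdiag_entry: "(A ** mdiag d) $ i $ j = A $ i $ j * d j"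
proof -
  have "(A ** mdiag d) $ i $ j = (\<Sum>k\<in>UNIV. if k = j then A $ i $ k * d k else 0)"
    unfolding matrix_matrix_mult_def mdiag_def vec_lambda_beta by (rule sum.cong) auto
  then show ?thesis by simp
qed

lemma mdiag_mul_entry: "(mdiag d ** A) $ i $ j = d i * A $ i $ j"
proof -
  have "(mdiag d ** A) $ i $ j = (\<Sum>k\<in>UNIV. if k = i then d k * A $ k $ j else 0)"
    unfolding matrix_matrix_mult_def mdiag_def vec_lambda_beta by (rule sum.cong) auto
  then show ?thesis by simp
qed

lemma mdiag_mul: "mdiag a ** mdiag b = mdiag (\<lambda>i. a i * b i)"
  by (simp add: vec_eq_iff mul_mdiag_entry) (simp add: mdiag_def)

lemma scaleR_mmul: "(k *\<^sub>R A) ** (B::real^'n^'n) = k *\<^sub>R (A ** B)"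
  by (simp add: vec_eq_iff matrix_matrix_mult_def sum_distrib_left mult.assoc)
lemma mmul_scaleR: "(A::real^'n^'n) ** (k *\<^sub>R B) = k *\<^sub>R (A ** B)"
  by (simp add: vec_eq_iff matrix_matrix_mult_def sum_distrib_left mult.left_commute)

lemma mdiag_const: "mdiag (\<lambda>_. k) = k *\<^sub>R mat 1"
  by (simp add: mdiag_def mat_def vec_eq_iff)

lemma trace_mdiag: "trace (mdiag d) = (\<Sum>i\<in>UNIV. d i)"
  by (simp add: trace_def mdiag_def)

lemma det_mdiag: "det (mdiag d) = (\<Prod>i\<in>UNIV. d i)"
  by (subst det_diagonal) (auto simp: mdiag_def)

lemma transpose_mdiag[simp]: "transpose (mdiag d) = mdiag d"
  by (simp add: mdiag_def transpose_def vec_eq_iff)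

lemma mdiag_mulv: "(mdiag d *v y) $ i = d i * y $ i"
proof -
  have "(mdiag d *v y) $ i = (\<Sum>k\<in>UNIV. if k = i then d k * y $ k else 0)"
    unfolding matrix_vector_mult_def mdiag_def vec_lambda_beta by (rule sum.cong) auto
  then show ?thesis by simp
qed

lemma dot_mdiag: "y \<bullet> (mdiag d *v y) = (\<Sum>i\<in>UNIV. d i * (y $ i)^2)"
  by (simp add: inner_vec_def mdiag_mulv power2_eq_square mult.commute mult.left_commute)

lemma dot_mat_transpose: "(x::real^'n) \<bullet> (A *v y) = (transpose A *v x) \<bullet> y"
  by (metis dot_lmul_matrix vector_transpose_matrix transpose_transpose)

lemma orth_left: "orthogonal_matrix Q \<Longrightarrow> transpose Q ** Q = mat 1"
  by (simp add: orthogonal_matrix_def)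
lemma orth_right: "orthogonal_matrix Q \<Longrightarrow> Q ** transpose Q = mat 1"
  by (simp add: orthogonal_matrix_def)

definition sdw :: "real^'n^'n \<Rightarrow> ('n::finite \<Rightarrow> real) \<Rightarrow> real^'n^'n" where
  "sdw Q d = Q ** mdiag d ** transpose Q"

lemma sdw_mul: "orthogonal_matrix Q \<Longrightarrow> sdw Q a ** sdw Q b = sdw Q (\<lambda>i. a i * b i)"
proof -
  assume o: "orthogonal_matrix Q"
  have "sdw Q a ** sdw Q b = Q ** mdiag a ** (transpose Q ** Q) ** mdiag b ** transpose Q"
    by (simp add: sdw_def matrix_mul_assoc)
  also have "\<dots> = Q ** (mdiag a ** mdiag b) ** transpose Q"
    using o by (simp add: orth_left matrix_mul_rid matrix_mul_assoc)
  also have "\<dots> = sdw Q (\<lambda>i. a i * b i)"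
    by (simp add: sdw_def mdiag_mul)
  finally show ?thesis .
qed

lemma sdw_one: "orthogonal_matrix Q \<Longrightarrow> sdw Q (\<lambda>_. 1) = mat 1"
  by (simp add: sdw_def mdiag_const orth_right matrix_mul_rid)

lemma sdw_const: "orthogonal_matrix Q \<Longrightarrow> sdw Q (\<lambda>_. k) = k *\<^sub>R mat 1"
  by (simp add: sdw_def mdiag_const orth_right matrix_mul_rid scaleR_mmul mmul_scaleR)

lemma transpose_sdw: "transpose (sdw Q d) = sdw Q d"
  by (simp add: sdw_def matrix_transpose_mul matrix_mul_assoc)

lemma trace_sdw: "orthogonal_matrix Q \<Longrightarrow> trace (sdw Q d) = (\<Sum>i\<in>UNIV. d i)"
  by (metis sdw_def trace_mul_sym matrix_mul_assoc orth_left matrix_mul_lid trace_mdiag)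

lemma det_sdw: "orthogonal_matrix Q \<Longrightarrow> det (sdw Q d) = (\<Prod>i\<in>UNIV. d i)"
proof -
  assume o: "orthogonal_matrix Q"
  have "det Q * det Q = 1"
    using det_orthogonal_matrix[OF o] by auto
  then show ?thesis by (simp add: sdw_def det_mul det_transpose det_mdiag)
qed

lemma matpow_Suc: "matpow A (Suc k) = matpow A k ** A"
  by (simp add: matpow_def)

lemma matpow_sdw: "orthogonal_matrix Q \<Longrightarrow> matpow (sdw Q d) k = sdw Q (\<lambda>i. d i ^ k)"
  by (induction k) (simp_all add: matpow_def sdw_one sdw_mul mult.commute)

lemma invertible_inv:
  assumes "(A::real^'n^'n) ** B = mat 1" "B ** A = mat 1"
  shows "matrix_inv A = B"
proof -
  have ex: "\<exists>A'. A ** A' = mat 1 \<and> A' ** A = mat 1" using assms by blast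
  define C where "C = matrix_inv A"
  have C: "A ** C = mat 1 \<and> C ** A = mat 1"
    unfolding C_def matrix_inv_def by (rule someI_ex[OF ex])
  have "C = (B ** A) ** C" using assms by (simp add: matrix_mul_lid)
  also have "\<dots> = B ** (A ** C)" by (simp add: matrix_mul_assoc)
  also have "\<dots> = B" using C by (simp add: matrix_mul_rid)
  finally show ?thesis by (simp add: C_def)
qed

lemma matrix_inv_props:
  assumes "invertible (A::real^'n^'n)"
  shows "A ** matrix_inv A = mat 1" "matrix_inv A ** A = mat 1"
proof -
  have ex: "\<exists>A'. A ** A' = mat 1 \<and> A' ** A = mat 1" using assms by (simp add: invertible_def)
  show "A ** matrix_inv A = mat 1" "matrix_inv A ** A = mat 1"
    unfolding matrix_inv_def using someI_ex[OF ex] by auto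
qed

lemma inv_sdw: "orthogonal_matrix Q \<Longrightarrow> \<forall>i. d i \<noteq> 0 \<Longrightarrow> matrix_inv (sdw Q d) = sdw Q (\<lambda>i. inverse (d i))"
  by (rule invertible_inv) (simp_all add: sdw_mul sdw_one)



lemma sym_dot: "transpose A = A \<Longrightarrow> (x::real^'n) \<bullet> (A *v y) = (A *v x) \<bullet> y"
  by (metis dot_mat_transpose)

lemma quad_zero:
  fixes b K :: real
  assumes "\<And>t. 2 * t * b \<le> t^2 * K"
  shows "b = 0"
proof (cases "K \<le> 0")
  case True
  have "2 * b * b \<le> b^2 * K" using assms[of b] by simp
  moreover have "b^2 * K \<le> 0" using True by (simp add: mult_nonneg_nonpos)
  ultimately have "b * b \<le> 0" by (simp add: power2_eq_square)
  then show ?thesis by (metis mult_eq_0_iff not_square_less_zero order_antisym_conv zero_le_square)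
next
  case False
  have "2 * (b/K) * b \<le> (b/K)^2 * K" using assms[of "b/K"] by simp
  then have "2 * b^2 / K \<le> b^2 / K" using False by (simp add: power2_eq_square field_simps)
  then have "b^2 \<le> 0" using False by (simp add: divide_le_cancel)
  then show ?thesis by simp
qed

lemma eig_exists:
  fixes A :: "real^'n^'n"
  assumes sym: "transpose A = A" and V: "subspace V" "V \<noteq> {0}" and inv: "\<forall>x\<in>V. A *v x \<in> V"
  shows "\<exists>v\<in>V. norm v = 1 \<and> A *v v = (v \<bullet> (A *v v)) *\<^sub>R v"
proof -
  define f where "f x = x \<bullet> (A *v x)" for x :: "real^'n"
  define S where "S = V \<inter> sphere 0 1"
  have "compact S" unfolding S_def
    by (metis Int_commute closed_subspace compact_Int_closed compact_sphere V(1))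
  obtain x0 where x0: "x0 \<in> V" "x0 \<noteq> 0" using V subspace_0 by blast
  have "(1 / norm x0) *\<^sub>R x0 \<in> S" using x0 V(1)
    by (simp add: S_def subspace_scale)
  then have "S \<noteq> {}" by blast
  have cf: "continuous_on S f" unfolding f_def
    by (intro continuous_intros linear_continuous_on matrix_vector_mul_linear)
  obtain v where v: "v \<in> S" and vmax: "\<And>y. y \<in> S \<Longrightarrow> f y \<le> f v"
    using continuous_attains_sup[OF \<open>compact S\<close> \<open>S \<noteq> {}\<close> cf] by blast
  define \<mu> where "\<mu> = f v"
  have vV: "v \<in> V" and nv: "norm v = 1" using v by (auto simp: S_def)
  have vv: "v \<bullet> v = 1" using nv by (simp add: norm_eq_1)
  have bound: "f x \<le> \<mu> * (x \<bullet> x)" if "x \<in> V" for x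
  proof (cases "x = 0")
    case True then show ?thesis by (simp add: f_def)
  next
    case False
    let ?y = "(1 / norm x) *\<^sub>R x"
    have "?y \<in> S" using that False V(1) by (simp add: S_def subspace_scale)
    then have "f ?y \<le> \<mu>" using vmax \<mu>_def by blast
    moreover have "f ?y = f x / (norm x)^2"
      by (simp add: f_def matrix_vector_mult_scaleR power2_eq_square)
    ultimately have "f x \<le> \<mu> * (norm x)^2" using False
      by (simp add: divide_le_eq)
    then show ?thesis by (simp add: power2_norm_eq_inner)
  qed
  define w where "w = A *v v - \<mu> *\<^sub>R v"
  have wV: "w \<in> V" unfolding w_def using V(1) inv vV
    by (simp add: subspace_diff subspace_scale)
  have key: "2 * t * (w \<bullet> w) \<le> t^2 * (\<mu> * (w \<bullet> w) - f w)" for t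
  proof -
    have "v + t *\<^sub>R w \<in> V" using wV vV V(1) by (simp add: subspace_add subspace_scale)
    from bound[OF this] have "f (v + t *\<^sub>R w) \<le> \<mu> * ((v + t *\<^sub>R w) \<bullet> (v + t *\<^sub>R w))" .
    moreover have "f (v + t *\<^sub>R w) = f v + 2 * t * (w \<bullet> (A *v v)) + t^2 * f w"
      using sym_dot[OF sym, of v w]
      by (simp add: f_def matrix_vector_right_distrib matrix_vector_mult_scaleR inner_add_left inner_add_right
          power2_eq_square algebra_simps inner_commute)
    moreover have "(v + t *\<^sub>R w) \<bullet> (v + t *\<^sub>R w) = 1 + 2 * t * (v \<bullet> w) + t^2 * (w \<bullet> w)"
      using vv by (simp add: inner_add_left inner_add_right power2_eq_square algebra_simps inner_commute)
    moreover have "w \<bullet> (A *v v) = w \<bullet> w + \<mu> * (v \<bullet> w)"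
      by (simp add: w_def inner_diff_left inner_diff_right inner_commute algebra_simps)
    ultimately have "f v + 2 * t * (w \<bullet> w + f v * (v \<bullet> w)) + t^2 * f w
        \<le> f v * (1 + 2 * t * (v \<bullet> w) + t^2 * (w \<bullet> w))" unfolding \<mu>_def by simp
    then show ?thesis unfolding \<mu>_def by (simp add: algebra_simps)
  qed
  have "w \<bullet> w = 0" by (rule quad_zero[OF key])
  then have "w = 0" by simp
  then have "A *v v = \<mu> *\<^sub>R v" by (simp add: w_def)
  then show ?thesis using vV nv by (auto simp: \<mu>_def f_def)
qed



lemma eig_basis:
  fixes A :: "real^'n^'n"
  assumes sym: "transpose A = A"
  shows "subspace V \<Longrightarrow> (\<forall>x\<in>V. A *v x \<in> V) \<Longrightarrow>
    \<exists>B. B \<subseteq> V \<and> pairwise orthogonal B \<and> (\<forall>b\<in>B. norm b = 1 \<and> A *v b = (b \<bullet> (A *v b)) *\<^sub>R b) \<and> V \<subseteq> span B"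
proof (induction "dim V" arbitrary: V rule: less_induct)
  case less
  show ?case
  proof (cases "V = {0}")
    case True
    then show ?thesis by (intro exI[of _ "{}"]) auto
  next
    case False
    obtain v where vV: "v \<in> V" and nv: "norm v = 1" and ev: "A *v v = (v \<bullet> (A *v v)) *\<^sub>R v"
      using eig_exists[OF sym less.prems(1) False less.prems(2)] by blast
    define \<mu> where "\<mu> = v \<bullet> (A *v v)"
    have ev': "A *v v = \<mu> *\<^sub>R v" using ev unfolding \<mu>_def .
    define V' where "V' = V \<inter> {x. v \<bullet> x = 0}"
    have "{x. v \<bullet> x = 0} = {y. orthogonal v y}" by (simp add: orthogonal_def)
    then have sV': "subspace V'" unfolding V'_def
      by (metis subspace_inter less.prems(1) subspace_orthogonal_to_vector)
    have iV': "\<forall>x\<in>V'. A *v x \<in> V'"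
    proof
      fix x assume x: "x \<in> V'"
      have "v \<bullet> (A *v x) = (A *v v) \<bullet> x" by (rule sym_dot[OF sym])
      also have "\<dots> = 0" using x ev' by (simp add: V'_def)
      finally show "A *v x \<in> V'" using x less.prems(2) by (simp add: V'_def)
    qed
    have vv: "v \<bullet> v = 1" using nv by (simp add: norm_eq_1)
    have "v \<notin> V'" using vv by (simp add: V'_def)
    moreover have "V' \<subseteq> V" by (auto simp: V'_def)
    ultimately have "V' \<subset> V" using vV by blast
    then have "span V' \<subset> span V"
      using sV' less.prems(1) by (metis span_eq_iff)
    then have "dim V' < dim V" by (rule dim_psubset)
    from less.hyps[OF this sV' iV'] obtain B' where B':
      "B' \<subseteq> V'" "pairwise orthogonal B'" "\<forall>b\<in>B'. norm b = 1 \<and> A *v b = (b \<bullet> (A *v b)) *\<^sub>R b"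
      "V' \<subseteq> span B'" by blast
    show ?thesis
    proof (intro exI[of _ "insert v B'"] conjI)
      show "insert v B' \<subseteq> V" using B'(1) vV by (auto simp: V'_def)
      show "pairwise orthogonal (insert v B')"
        using B'(1,2) vv unfolding pairwise_insert
        by (auto simp: V'_def orthogonal_def inner_commute)
      show "\<forall>b\<in>insert v B'. norm b = 1 \<and> A *v b = (b \<bullet> (A *v b)) *\<^sub>R b"
        using B'(3) nv ev by auto
      show "V \<subseteq> span (insert v B')"
      proof
        fix x assume x: "x \<in> V"
        have "x - (v \<bullet> x) *\<^sub>R v \<in> V'"
          using x vV vv less.prems(1) by (simp add: V'_def subspace_diff subspace_scale inner_diff_right)
        then have "x - (v \<bullet> x) *\<^sub>R v \<in> span (insert v B')"
          using B'(4) span_mono[of B' "insert v B'"] by auto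
        moreover have "(v \<bullet> x) *\<^sub>R v \<in> span (insert v B')"
          by (simp add: span_base span_scale)
        ultimately have "(x - (v \<bullet> x) *\<^sub>R v) + (v \<bullet> x) *\<^sub>R v \<in> span (insert v B')"
          by (rule span_add)
        then show "x \<in> span (insert v B')" by simp
      qed
    qed
  qed
qed

lemma spectral:
  fixes A :: "real^'n^'n"
  assumes sym: "transpose A = A"
  shows "\<exists>Q d. orthogonal_matrix Q \<and> A = sdw Q d"
proof -
  obtain B where B: "pairwise orthogonal B" "\<forall>b\<in>B. norm b = 1 \<and> A *v b = (b \<bullet> (A *v b)) *\<^sub>R b"
    "UNIV \<subseteq> span B"
    using eig_basis[OF sym, of UNIV] by auto
  have "0 \<notin> B" using B(2) by force
  then have ind: "independent B" using B(1) pairwise_orthogonal_independent by blast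
  then have fin: "finite B" using independent_bound by blast
  have "span B = UNIV" using B(3) by auto
  then have "card B = dim (UNIV :: (real^'n) set)" using dim_span_eq_card_independent[OF ind] by simp
  also have "\<dots> = CARD('n)" by simp
  finally have cB: "card (UNIV::'n set) = card B" by simp
  obtain f where f: "bij_betw f (UNIV::'n set) B"
    using finite_same_card_bij[OF finite_class.finite_UNIV fin cB] by blast
  define Q :: "real^'n^'n" where "Q = (\<chi> i j. f j $ i)"
  have col: "column j Q = f j" for j by (simp add: Q_def column_def vec_eq_iff)
  have fB: "f j \<in> B" for j using f by (auto simp: bij_betw_def)
  have oQ: "orthogonal_matrix Q"
    unfolding orthogonal_matrix_orthonormal_columns col
  proof (intro conjI allI impI)
    fix i show "norm (f i) = 1" using B(2) fB by auto
  next
    fix i j :: 'n assume "i \<noteq> j"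
    then have "f i \<noteq> f j" using f by (auto simp: bij_betw_def inj_on_def)
    then show "orthogonal (f i) (f j)" using B(1) fB by (auto simp: pairwise_def)
  qed
  define d where "d j = f j \<bullet> (A *v f j)" for j
  have eig: "A *v f j = d j *\<^sub>R f j" for j using B(2) fB d_def by auto
  have AQ: "A ** Q = Q ** mdiag d"
  proof -
    have "(A ** Q) $ i $ j = (A *v f j) $ i" for i j
      by (simp add: matrix_matrix_mult_def matrix_vector_mult_def Q_def)
    then show ?thesis by (simp add: vec_eq_iff mul_mdiag_entry eig Q_def)
  qed
  have "A = A ** (Q ** transpose Q)" using oQ by (simp add: orth_right)
  also have "\<dots> = (A ** Q) ** transpose Q" by (simp add: matrix_mul_assoc)
  also have "\<dots> = sdw Q d" by (simp add: AQ sdw_def)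
  finally show ?thesis using oQ by blast
qed



lemma sdw_mulv: "sdw Q d *v x = Q *v (mdiag d *v (transpose Q *v x))"
  by (simp add: sdw_def matrix_vector_mul_assoc matrix_mul_assoc del: transpose_matrix_vector)

lemma quad_sdw: "x \<bullet> (sdw Q d *v x) = (transpose Q *v x) \<bullet> (mdiag d *v (transpose Q *v x))"
  by (simp add: sdw_mulv dot_mat_transpose)

lemma axis_sq: "(axis i (1::real) $ j)^2 = (if j = i then 1 else 0)"
  by (simp add: axis_def)

lemma posdef_sdw:
  assumes o: "orthogonal_matrix Q"
  shows "posdef (sdw Q d) \<longleftrightarrow> (\<forall>i. d i > 0)"
proof
  assume p: "posdef (sdw Q d)"
  show "\<forall>i. d i > 0"
  proof
    fix i
    let ?x = "Q *v axis i (1::real)"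
    have tx: "transpose Q *v ?x = axis i 1"
      using o by (simp add: matrix_vector_mul_assoc orth_left)
    have "?x \<noteq> 0" using tx by (metis axis_eq_0_iff matrix_vector_mult_0_right zero_neq_one)
    then have "?x \<bullet> (sdw Q d *v ?x) > 0" using p by (simp add: posdef_def)
    moreover have "?x \<bullet> (sdw Q d *v ?x) = d i"
      unfolding quad_sdw tx dot_mdiag axis_sq by (simp add: if_distrib cong: if_cong)
    ultimately show "d i > 0" by simp
  qed
next
  assume d: "\<forall>i. d i > 0"
  show "posdef (sdw Q d)"
    unfolding posdef_def
  proof (intro conjI allI impI)
    show "transpose (sdw Q d) = sdw Q d" by (rule transpose_sdw)
    fix x :: "real^'a" assume "x \<noteq> 0"
    let ?y = "transpose Q *v x"
    have "Q *v ?y = x" using o by (simp add: matrix_vector_mul_assoc orth_right del: transpose_matrix_vector)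
    then have "?y \<noteq> 0" using \<open>x \<noteq> 0\<close> by auto
    then obtain j where j: "?y $ j \<noteq> 0" by (auto simp: vec_eq_iff)
    have "0 < (\<Sum>i\<in>UNIV. d i * (?y $ i)^2)"
      by (rule sum_pos2[of _ j]) (use d j in \<open>auto simp: less_imp_le zero_le_mult_iff zero_less_mult_iff\<close>)
    then show "x \<bullet> (sdw Q d *v x) > 0" by (simp add: quad_sdw dot_mdiag)
  qed
qed

lemma posdef_decomp:
  assumes "posdef (A::real^'n^'n)"
  obtains Q d where "orthogonal_matrix Q" "A = sdw Q d" "\<forall>i. d i > 0"
proof -
  have "transpose A = A" using assms by (simp add: posdef_def)
  then obtain Q d where "orthogonal_matrix Q" "A = sdw Q d" using spectral by blast
  with assms posdef_sdw show ?thesis using that by blast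
qed

lemma col_eig_mul:
  assumes "\<And>j. M *v column j Q = e j *\<^sub>R column j (Q::real^'n^'n)"
  shows "M ** Q = Q ** mdiag e"
proof -
  have "(M ** Q) $ i $ j = (M *v column j Q) $ i" for i j
    by (simp add: matrix_matrix_mult_def matrix_vector_mult_def column_def)
  then show ?thesis using assms[unfolded column_def vec_eq_iff]
    by (simp add: vec_eq_iff mul_mdiag_entry column_def mult.commute)
qed

lemma col_sdw:
  assumes o: "orthogonal_matrix Q"
  shows "sdw Q d *v column j Q = d j *\<^sub>R column j Q"
proof -
  have c: "column j Q = Q *v axis j 1"
    by (simp add: column_def matrix_vector_mult_def axis_def vec_eq_iff if_distrib cong: if_cong)
  have "transpose Q *v column j Q = axis j 1" using o by (simp add: c matrix_vector_mul_assoc orth_left)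
  moreover have "mdiag d *v axis j 1 = d j *\<^sub>R axis j 1"
    by (simp add: vec_eq_iff mdiag_mulv axis_def)
  ultimately show ?thesis by (simp add: sdw_mulv c matrix_vector_mult_scaleR)
qed

lemma sqrt_unique:
  assumes o: "orthogonal_matrix Q" and d: "\<forall>i. d i > 0"
    and T: "posdef T" "T ** T = sdw Q d"
  shows "T = sdw Q (\<lambda>i. sqrt (d i))"
proof -
  have eig: "T *v column j Q = sqrt (d j) *\<^sub>R column j Q" for j
  proof -
    let ?u = "column j Q" and ?s = "sqrt (d j)"
    define w where "w = T *v ?u - ?s *\<^sub>R ?u"
    have s2: "?s * ?s = d j" using d by (simp add: less_imp_le)
    have "T *v w = (T ** T) *v ?u - ?s *\<^sub>R (T *v ?u)"
      by (simp add: w_def matrix_vector_mult_diff_distrib matrix_vector_mult_scaleR matrix_vector_mul_assoc)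
    also have "\<dots> = - ?s *\<^sub>R w"
      using col_sdw[OF o, of d j] T(2) s2 by (simp add: w_def algebra_simps)
    finally have Tw: "T *v w = - ?s *\<^sub>R w" .
    have "w = 0"
    proof (rule ccontr)
      assume "w \<noteq> 0"
      then have "w \<bullet> (T *v w) > 0" using T(1) by (simp add: posdef_def)
      moreover have "w \<bullet> (T *v w) = - ?s * (w \<bullet> w)" by (simp add: Tw)
      moreover have "?s > 0" using d by simp
      moreover have "?s * (w \<bullet> w) \<ge> 0" using d by (simp add: less_imp_le)
      ultimately show False by linarith
    qed
    then show ?thesis by (simp add: w_def)
  qed
  have "T ** Q = Q ** mdiag (\<lambda>i. sqrt (d i))" by (rule col_eig_mul) (simp add: eig)
  then have 1: "T ** Q ** transpose Q = sdw Q (\<lambda>i. sqrt (d i))" by (simp add: sdw_def)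
  have "T = T ** (Q ** transpose Q)" using o by (simp add: orth_right)
  also have "\<dots> = T ** Q ** transpose Q" by (simp add: matrix_mul_assoc)
  finally show ?thesis using 1 by simp
qed

lemma psd_sqrt_props:
  assumes "posdef Psi"
  shows "posdef (psd_sqrt Psi) \<and> psd_sqrt Psi ** psd_sqrt Psi = Psi"
proof -
  obtain Q d where o: "orthogonal_matrix Q" and P: "Psi = sdw Q d" and d: "\<forall>i. d i > 0"
    using posdef_decomp[OF assms] by blast
  let ?S = "sdw Q (\<lambda>i. sqrt (d i))"
  have ex: "posdef ?S \<and> ?S ** ?S = Psi"
    using o d by (simp add: posdef_sdw sdw_mul P less_imp_le)
  have "\<exists>!S. posdef S \<and> S ** S = Psi"
  proof (rule ex1I[of _ ?S])
    show "posdef ?S \<and> ?S ** ?S = Psi" by (rule ex)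
    fix T assume "posdef T \<and> T ** T = Psi"
    then show "T = ?S" using sqrt_unique[OF o d] P by blast
  qed
  then show ?thesis unfolding psd_sqrt_def by (rule theI')
qed



lemma ln_strict:
  fixes y :: real assumes "y > 0" "y \<noteq> 1" shows "ln y < y - 1"
proof -
  define r where "r = sqrt y"
  have r: "r > 0" "r * r = y" using assms by (auto simp: r_def)
  have "r \<noteq> 1" using r assms by auto
  have "ln y = ln (r * r)" using r(2) by simp
  also have "\<dots> = 2 * ln r" using r(1) by (simp add: ln_mult)
  also have "\<dots> \<le> 2 * (r - 1)" using ln_le_minus_one[OF r(1)] by simp
  also have "\<dots> < r * r - 1"
  proof -
    have "(r - 1) * (r - 1) > 0" using \<open>r \<noteq> 1\<close> by (cases "r < 1") (auto simp: zero_less_mult_iff)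
    then show ?thesis by (simp add: algebra_simps)
  qed
  finally show ?thesis unfolding r(2) .
qed

lemma G_max:
  fixes u us a :: real
  assumes "u > 0" "us > 0" "a = us / 2"
  shows "-(1/2) * u + a * ln u \<le> -(1/2) * us + a * ln us"
    and "-(1/2) * u + a * ln u = -(1/2) * us + a * ln us \<Longrightarrow> u = us"
proof -
  define y where "y = u / us"
  have y: "y > 0" using assms by (simp add: y_def)
  have lu: "ln u = ln y + ln us" using assms by (simp add: y_def ln_div)
  have uu: "u = y * us" using assms by (simp add: y_def)
  have diff: "(-(1/2) * u + a * ln u) - (-(1/2) * us + a * ln us) = a * (ln y - (y - 1))"
  proof -
    have r: "-(1/2) * (y*us) + (us/2) * (ln y + ln us) - (-(1/2) * us + (us/2) * ln us) = (us/2) * (ln y - (y - 1))"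
      by (simp add: algebra_simps)
    show ?thesis unfolding lu unfolding assms(3) uu by (rule r)
  qed
  have a: "a > 0" using assms by simp
  show "-(1/2) * u + a * ln u \<le> -(1/2) * us + a * ln us"
  proof -
    have "a * (ln y - (y - 1)) \<le> 0"
      using ln_le_minus_one[OF y] a by (intro mult_nonneg_nonpos) auto
    then show ?thesis using diff by linarith
  qed
  assume eq: "-(1/2) * u + a * ln u = -(1/2) * us + a * ln us"
  show "u = us"
  proof (rule ccontr)
    assume "u \<noteq> us"
    then have "y \<noteq> 1" using assms by (simp add: y_def)
    then have "ln y - (y - 1) < 0" using ln_strict[OF y] by simp
    then have "a * (ln y - (y - 1)) < 0" using a by (simp add: mult_pos_neg)
    then show False using diff eq by simp
  qed
qed

lemma g_max:
  fixes x E :: real and q :: nat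
  assumes q: "q \<ge> 1" and E: "E > 0" and x: "x > 0"
  defines "k \<equiv> (real q / (2 * E)) powr (1 / real q)"
  shows "-(1/2) * inverse x ^ q - E * ln x \<le> -(1/2) * inverse k ^ q - E * ln k"
    and "-(1/2) * inverse x ^ q - E * ln x = -(1/2) * inverse k ^ q - E * ln k \<Longrightarrow> x = k"
proof -
  have k: "k > 0" using q E by (simp add: k_def)
  have "k ^ q = real q / (2 * E)"
    using q E k unfolding k_def by (simp add: powr_realpow[symmetric] powr_powr)
  then have iks: "inverse k ^ q = 2 * E / real q"
    by (metis power_inverse inverse_divide)
  have conv: "-(1/2) * inverse z ^ q - E * ln z = -(1/2) * (inverse z ^ q) + (E / real q) * ln (inverse z ^ q)"
    if "z > 0" for z :: real
    using that q by (simp add: ln_realpow ln_inverse)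
  have a: "E / real q = (2 * E / real q) / 2" by simp
  have ux: "inverse x ^ q > 0" using x by simp
  have uk: "2 * E / real q > 0" using E q by simp
  note G = G_max[OF ux uk a]
  show "-(1/2) * inverse x ^ q - E * ln x \<le> -(1/2) * inverse k ^ q - E * ln k"
    unfolding conv[OF x] conv[OF k] unfolding iks by (rule G(1))
  assume eq: "-(1/2) * inverse x ^ q - E * ln x = -(1/2) * inverse k ^ q - E * ln k"
  have "inverse x ^ q = 2 * E / real q"
    using eq unfolding conv[OF x] conv[OF k] unfolding iks by (rule G(2))
  then have "inverse x ^ q = inverse k ^ q" unfolding iks .
  then have "inverse x = inverse k"
    using q x k by (subst (asm) power_eq_iff_eq_base) auto
  then show "x = k" by simp
qed



theorem mainTheorem3:
  fixes Psi :: "real^'n^'n" and m :: real and q :: nat and c :: real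
  assumes "posdef Psi"
    and "m \<ge> real CARD('n)"
    and "q \<ge> 1"
    and "c > 0"
  shows "\<forall>B. (posdef B \<and> (\<forall>B'. posdef B' \<longrightarrow> pinvwishart c q m Psi B' \<le> pinvwishart c q m Psi B))
            \<longleftrightarrow> B = (real q / (real q * m + real CARD('n) + 1)) powr (1 / real q) *\<^sub>R Psi"
proof -
  define p where "p = real CARD('n)"
  define E where "E = (real q * m + p + 1) / 2"
  define k where "k = (real q / (real q * m + p + 1)) powr (1 / real q)"
  have p1: "p \<ge> 1" unfolding p_def
    using zero_less_card_finite[where 'a='n] by linarith
  have qm: "real q * m \<ge> 0" using assms(2,3) p1 p_def by simp
  have E: "E > 0" unfolding E_def using qm p1 by simp
  have E2: "2 * E = real q * m + p + 1" by (simp add: E_def)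
  have k_eq: "k = (real q / (2 * E)) powr (1 / real q)" unfolding k_def E2 ..
  have k0: "k > 0" using assms(3) E by (simp add: k_eq)
  define g where "g x = -(1/2) * inverse x ^ q - E * ln x" for x :: real
  have gle: "g x \<le> g k" if "x > 0" for x
    using g_max(1)[OF assms(3) E that] unfolding g_def k_eq .
  have geq: "x = k" if "x > 0" "g x = g k" for x
    using g_max(2)[OF assms(3) E that(1)] that(2) unfolding g_def k_eq by blast

  define S where "S = psd_sqrt Psi"
  have S: "posdef S" "S ** S = Psi" using psd_sqrt_props[OF assms(1)] by (auto simp: S_def)
  obtain Q0 s where Q0: "orthogonal_matrix Q0" "S = sdw Q0 s" "\<forall>i. s i > 0"
    using posdef_decomp[OF S(1)] by blast
  have sne: "s i \<noteq> 0" for i using Q0(3) by (metis less_irrefl)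
  define Si where "Si = matrix_inv S"
  have Si: "Si = sdw Q0 (\<lambda>i. inverse (s i))"
    unfolding Si_def Q0(2) using Q0(1) sne by (simp add: inv_sdw)
  have SSi: "S ** Si = mat 1" "Si ** S = mat 1"
    using Q0(1) sne by (simp_all add: Si Q0(2) sdw_mul sdw_one)
  have SiSX: "Si ** (S ** X) = X" for X
    by (metis matrix_mul_assoc SSi(2) matrix_mul_lid)
  have SSiX: "S ** (Si ** X) = X" for X
    by (metis matrix_mul_assoc SSi(1) matrix_mul_lid)
  have tSi: "transpose Si = Si" by (simp add: Si transpose_sdw)
  have tS: "transpose S = S" by (simp add: Q0(2) transpose_sdw)
  have dS: "det S > 0" using Q0 by (simp add: det_sdw prod_pos)
  define D where "D = det Psi"
  have D: "D = det S * det S" unfolding D_def S(2)[symmetric] by (simp add: det_mul)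
  have D0: "D > 0" using dS by (simp add: D)
  define K where "K = inverse c * D powr (real q * m / 2) * D powr (-E)"
  have K0: "K > 0" using assms(4) D0 by (simp add: K_def)
  have eE: "- (real q * m + real CARD('n) + 1) / 2 = -E" unfolding E_def p_def by linarith

  have formula: "pinvwishart c q m Psi (S ** sdw Q l ** S) = K * exp (\<Sum>i\<in>UNIV. g (l i))"
    if Q: "orthogonal_matrix Q" and l: "\<forall>i. l i > 0" for Q l
  proof -
    have lne: "\<forall>i. l i \<noteq> 0" using l by (metis less_irrefl)
    have C: "Si ** (S ** sdw Q l ** S) ** Si = sdw Q l"
      by (metis matrix_mul_assoc SiSX SSi(1) matrix_mul_rid)
    have tr: "trace (matpow_neg (sdw Q l) q) = (\<Sum>i\<in>UNIV. inverse (l i) ^ q)"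
      using Q lne by (simp add: matpow_neg_def inv_sdw matpow_sdw trace_sdw)
    have dB: "det (S ** sdw Q l ** S) = D * (\<Prod>i\<in>UNIV. l i)"
      using Q by (simp add: det_mul det_sdw D)
    have pl: "(\<Prod>i\<in>UNIV. l i) powr (-E) = exp (\<Sum>i\<in>UNIV. - E * ln (l i))"
    proof -
      have "(\<Prod>i\<in>UNIV. l i) powr (-E) = (\<Prod>i\<in>UNIV. l i powr (-E))" by (rule prod_powr_distrib)
      also have "\<dots> = (\<Prod>i\<in>UNIV. exp (- E * ln (l i)))"
        using lne by (intro prod.cong refl) (simp add: powr_def mult.commute)
      also have "\<dots> = exp (\<Sum>i\<in>UNIV. - E * ln (l i))" by (simp add: exp_sum)
      finally show ?thesis .
    qed
    have pw: "(D * (\<Prod>i\<in>UNIV. l i)) powr (-E) = D powr (-E) * exp (\<Sum>i\<in>UNIV. - E * ln (l i))"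
      using D0 l by (simp add: powr_mult prod_nonneg less_imp_le pl)
    have sg: "(\<Sum>i\<in>UNIV. g (l i)) = -(1/2) * (\<Sum>i\<in>UNIV. inverse (l i) ^ q) + (\<Sum>i\<in>UNIV. - E * ln (l i))"
      by (simp add: g_def sum_subtractf sum_negf sum_divide_distrib sum_distrib_left)
    show ?thesis
      unfolding pinvwishart_def S_def[symmetric] Si_def[symmetric] C tr dB eE pw sg D_def[symmetric]
      by (simp add: K_def exp_add[symmetric] algebra_simps)
  qed

  have decomp: "\<exists>Q l. orthogonal_matrix Q \<and> (\<forall>i. l i > 0) \<and> B = S ** sdw Q l ** S"
    if B: "posdef B" for B
  proof -
    define C where "C = Si ** B ** Si"
    have "posdef C" unfolding posdef_def
    proof (intro conjI allI impI)
      have "transpose B = B" using B by (simp add: posdef_def)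
      then show "transpose C = C" by (simp add: C_def matrix_transpose_mul tSi matrix_mul_assoc)
      fix x :: "real^'n" assume x: "x \<noteq> 0"
      have "Si *v x \<noteq> 0"
        using x SSi(1) by (metis matrix_vector_mul_assoc matrix_vector_mul_lid matrix_vector_mult_0_right)
      then have "(Si *v x) \<bullet> (B *v (Si *v x)) > 0" using B by (simp add: posdef_def)
      moreover have "x \<bullet> (C *v x) = (Si *v x) \<bullet> (B *v (Si *v x))"
        unfolding C_def by (metis dot_mat_transpose matrix_vector_mul_assoc tSi)
      ultimately show "x \<bullet> (C *v x) > 0" by simp
    qed
    then obtain Q l where "orthogonal_matrix Q" "C = sdw Q l" "\<forall>i. l i > 0"
      using posdef_decomp by blast
    moreover have "B = S ** C ** S"
      unfolding C_def by (metis matrix_mul_assoc SSiX SSi(2) matrix_mul_rid)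
    ultimately show ?thesis by blast
  qed

  have Bstar: "S ** sdw (mat 1) (\<lambda>_. k) ** S = k *\<^sub>R Psi"
    by (simp add: sdw_const orthogonal_matrix_id mmul_scaleR scaleR_mmul matrix_mul_rid S(2))
  have Bstar': "S ** sdw Q (\<lambda>_. k) ** S = k *\<^sub>R Psi" if "orthogonal_matrix Q" for Q
    using that by (simp add: sdw_const mmul_scaleR scaleR_mmul matrix_mul_rid S(2))
  define M where "M = K * exp (\<Sum>i\<in>(UNIV::'n set). g k)"
  have valstar: "pinvwishart c q m Psi (k *\<^sub>R Psi) = M"
    using formula[of "mat 1" "\<lambda>_. k"] k0 Bstar by (simp add: orthogonal_matrix_id M_def)
  have le: "pinvwishart c q m Psi B \<le> M" if hB: "posdef B" for B
  proof -
    obtain Q l where Ql: "orthogonal_matrix Q" "\<forall>i. l i > 0" "B = S ** sdw Q l ** S"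
      using decomp[OF hB] by blast
    have "(\<Sum>i\<in>UNIV. g (l i)) \<le> (\<Sum>i\<in>(UNIV::'n set). g k)" using Ql(2) gle by (intro sum_mono) auto
    then show ?thesis using formula[OF Ql(1,2)] Ql(3) K0 by (simp add: M_def)
  qed
  have eqc: "B = k *\<^sub>R Psi" if hB: "posdef B" "pinvwishart c q m Psi B = M" for B
  proof -
    obtain Q l where Ql: "orthogonal_matrix Q" "\<forall>i. l i > 0" "B = S ** sdw Q l ** S"
      using decomp[OF hB(1)] by blast
    have "K * exp (\<Sum>i\<in>UNIV. g (l i)) = K * exp (\<Sum>i\<in>(UNIV::'n set). g k)"
      using formula[OF Ql(1,2)] Ql(3) hB(2) by (simp add: M_def)
    then have sums: "(\<Sum>i\<in>UNIV. g (l i)) = (\<Sum>i\<in>(UNIV::'n set). g k)" using K0 by simp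
    have "\<forall>i. l i = k"
    proof (rule ccontr)
      assume "\<not> (\<forall>i. l i = k)"
      then obtain j where j: "l j \<noteq> k" by blast
      have "g (l j) < g k" using gle[of "l j"] geq[of "l j"] Ql(2) j by fastforce
      then have "(\<Sum>i\<in>UNIV. g (l i)) < (\<Sum>i\<in>(UNIV::'n set). g k)"
        using Ql(2) gle by (intro sum_strict_mono_ex1) auto
      then show False using sums by simp
    qed
    then have "l = (\<lambda>_. k)" by auto
    then show ?thesis using Ql(3) Bstar'[OF Ql(1)] by simp
  qed
  have pstar: "posdef (k *\<^sub>R Psi)"
  proof -
    obtain P d where P: "orthogonal_matrix P" "Psi = sdw P d" "\<forall>i. d i > 0"
      using posdef_decomp[OF assms(1)] by blast
    have "k *\<^sub>R Psi = sdw P (\<lambda>_. k) ** sdw P d"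
      using P(1) by (simp add: sdw_const scaleR_mmul matrix_mul_lid P(2))
    also have "\<dots> = sdw P (\<lambda>i. k * d i)" using P(1) by (simp add: sdw_mul)
    finally show ?thesis using P k0 by (simp add: posdef_sdw)
  qed
  have kk: "(real q / (real q * m + real CARD('n) + 1)) powr (1 / real q) = k"
    by (simp add: k_def p_def)
  show ?thesis unfolding kk
    using le eqc valstar pstar by (metis order_antisym)
qed


end
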